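(* Let $\{A_{k,n}:0\le k\le n,\ n\in\mathbb N\}$ be a triangular array of complex random variables satisfying Assumptions 1* and 2*. Then almost surely: $\lim_{n\to\infty}|A_{n,n}|^{1/n}=1$; for each fixed $k\ge0$, $\lim_{n\to\infty}|A_{k,n}|^{1/n}=1$; and $\lim_{n\to\infty}\max_{0\le k\le n}|A_{k,n}|^{1/n}=1$.
   Context: $F_{k,n}(x)=\mathbb P(|A_{k,n}|\le x)$. Assumption 1*: there is $N\in\mathbb N$ such that for each $n\ge N$ the random variables $|A_{0,n}|,\dots,|A_{n,n}|$ are jointly independent; and there are $a>1$ and a function $f:[a,\infty)\to[0,1]$ such that $f(x)\log x$ is decreasing, $\int_a^\infty f(x)\frac{\log x}{x}\,dx<\infty$, and $1-F_{k,n}(x)\le f(x)$ for all $x\ge a$, all $0\le k\le n$, all $n\ge N$. Assumption 2*: there are $N\in\mathbb N$, $0<b<1$ and an increasing $g:[0,b]\to[0,1]$ with $\int_0^bg(x)\,dx/x<\infty$ and $F_{k,n}(x)\le g(x)$ for all $x\in[0,b]$, $0\le k\le n$, $n\ge N$. *)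

theory Defs
  imports "HOL-Probability.Probability"
begin

definition cdf_abs :: "'a measure \<Rightarrow> ('a \<Rightarrow> complex) \<Rightarrow> real \<Rightarrow> real" where
  "cdf_abs M X x = measure M {\<omega> \<in> space M. cmod (X \<omega>) \<le> x}"

end

theory Submission
  imports Defs "HOL-Real_Asymp.Real_Asymp"
begin


lemma step_summable:
  fixes h :: "real \<Rightarrow> real" and l u d :: "nat \<Rightarrow> real" and S :: "real set"
  assumes fin: "(\<integral>\<^sup>+ x\<in>S. ennreal (h x) \<partial>lborel) < \<infinity>"
   and sub: "\<And>n. {l n..<u n} \<subseteq> S"
   and disj: "\<And>m n. m \<noteq> n \<Longrightarrow> u m \<le> l n \<or> u n \<le> l m"
   and lu: "\<And>n. l n \<le> u n"
   and d0: "\<And>n. 0 \<le> d n"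
   and dh: "\<And>n x. x \<in> {l n..<u n} \<Longrightarrow> d n \<le> h x"
  shows "summable (\<lambda>n. d n * (u n - l n))"
proof -
  have eq: "(\<integral>\<^sup>+x. (\<Sum>n. ennreal (d n) * indicator {l n..<u n} x) \<partial>lborel) = (\<Sum>n. ennreal (d n * (u n - l n)))"
    apply (subst nn_integral_suminf)
     apply simp
    apply (rule suminf_cong)
    using d0 lu by (simp add: nn_integral_cmult_indicator ennreal_mult)
  have le: "(\<Sum>n. ennreal (d n) * indicator {l n..<u n} x) \<le> ennreal (h x) * indicator S x" for x
  proof (cases "\<exists>m. x \<in> {l m..<u m}")
    case True then obtain m where m: "x \<in> {l m..<u m}" by blast
    have "(\<Sum>n. ennreal (d n) * indicator {l n..<u n} x) = (\<Sum>n\<in>{m}. ennreal (d n) * indicator {l n..<u n} x)"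
    proof (rule suminf_finite)
      fix n assume n: "n \<notin> {m}"
      have "x \<notin> {l n..<u n}" using disj[of m n] m n by auto
      then show "ennreal (d n) * indicator {l n..<u n} x = 0" by simp
    qed simp
    also have "\<dots> = ennreal (d m)" using m by simp
    also have "\<dots> \<le> ennreal (h x) * indicator S x"
    proof -
      have "x \<in> S" using m sub[of m] by auto
      then show ?thesis using dh[OF m] by (simp add: ennreal_leI)
    qed
    finally show ?thesis .
  next
    case False then show ?thesis by simp
  qed
  have "(\<Sum>n. ennreal (d n * (u n - l n))) \<le> (\<integral>\<^sup>+x\<in>S. ennreal (h x) \<partial>lborel)"
    unfolding eq[symmetric] by (rule nn_integral_mono) (rule le)
  with fin have "(\<Sum>n. ennreal (d n * (u n - l n))) \<noteq> \<top>" by (auto simp: top_unique)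
  then show ?thesis using d0 lu by (intro summable_suminf_not_top) auto
qed

lemma conv_from_bounds:
  fixes x :: "nat \<Rightarrow> real"
  assumes "\<forall>j::nat. eventually (\<lambda>n. exp (-(1/real (Suc j))) \<le> x n \<and> x n \<le> exp (1/real (Suc j))) sequentially"
  shows "x \<longlonglongrightarrow> 1"
proof -
  have t1: "(\<lambda>j. exp (1/real (Suc j))) \<longlonglongrightarrow> 1" by real_asymp
  have t2: "(\<lambda>j. exp (-(1/real (Suc j)))) \<longlonglongrightarrow> 1" by real_asymp
  show ?thesis unfolding tendsto_iff
  proof (intro allI impI)
    fix r :: real assume r: "r > 0"
    have "eventually (\<lambda>j. dist (exp (1/real (Suc j))) 1 < r \<and> dist (exp (-(1/real (Suc j)))) 1 < r) sequentially"
      using tendstoD[OF t1 r] tendstoD[OF t2 r] by (rule eventually_conj)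
    then obtain j where j: "dist (exp (1/real (Suc j))) 1 < r" "dist (exp (-(1/real (Suc j)))) 1 < r"
      by (auto simp: eventually_sequentially)
    show "eventually (\<lambda>n. dist (x n) 1 < r) sequentially"
      using assms[rule_format, of j] by eventually_elim (use j in \<open>auto simp: dist_real_def\<close>)
  qed
qed

lemma powr_bounds:
  fixes c t :: real and n :: nat
  assumes "n > 0" "exp (-(real n * t)) \<le> c" "c \<le> exp (real n * t)"
  shows "exp (-t) \<le> c powr (1/real n) \<and> c powr (1/real n) \<le> exp t"
proof -
  have c0: "0 \<le> c" using assms(2) by (smt (verit) exp_gt_zero)
  show ?thesis
  proof
  have "exp (-(real n * t)) powr (1/real n) \<le> c powr (1/real n)"
    by (rule powr_mono2) (use assms c0 in auto)
  moreover have "exp (-(real n * t)) powr (1/real n) = exp (-t)" using assms(1) by (simp add: exp_powr_real)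
  ultimately show "exp (-t) \<le> c powr (1/real n)" by simp
  have "c powr (1/real n) \<le> exp (real n * t) powr (1/real n)"
    by (rule powr_mono2) (use assms c0 in auto)
  moreover have "exp (real n * t) powr (1/real n) = exp t" using assms(1) by (simp add: exp_powr_real)
  ultimately show "c powr (1/real n) \<le> exp t" by simp
  qed
qed


lemma upper_sum:
  fixes f :: "real \<Rightarrow> real"
  assumes a: "a > 1" and f0: "\<forall>x\<ge>a. 0 \<le> f x" and am: "antimono_on {a..} (\<lambda>x. f x * ln x)"
    and fin: "(\<integral>\<^sup>+ x\<in>{a..}. ennreal (f x * ln x / x) \<partial>lborel) < \<infinity>" and e: "e > 0"
  shows "summable (\<lambda>n. real n * f (exp (real n * e)))"
proof -
  define n0 where "n0 = nat \<lceil>ln a / e\<rceil>"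
  have "ln a / e \<le> real n0" unfolding n0_def by linarith
  then have "ln a \<le> real n0 * e" using e by (simp add: field_simps)
  then have "exp (ln a) \<le> exp (real n0 * e)" by simp
  then have n0: "a \<le> exp (real n0 * e)" using a by simp
  define l where "l n = exp (real (n + n0) * e)" for n
  define u where "u n = exp (real (n + Suc n0) * e)" for n
  define d where "d n = f (u n) * ln (u n) / u n" for n
  have la: "a \<le> l n" for n
  proof -
    have "real n0 * e \<le> real (n + n0) * e" using e by (intro mult_right_mono) auto
    then show ?thesis using n0 unfolding l_def by (meson exp_le_cancel_iff order_trans)
  qed
  have ua: "a \<le> u n" for n
  proof -
    have "real n0 * e \<le> real (n + Suc n0) * e" using e by (intro mult_right_mono) auto
    then show ?thesis using n0 unfolding u_def by (meson exp_le_cancel_iff order_trans)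
  qed
  have upos: "0 < u n" for n unfolding u_def by simp
  have "summable (\<lambda>n. d n * (u n - l n))"
  proof (rule step_summable[OF fin])
    show "{l n..<u n} \<subseteq> {a..}" for n using la[of n] by auto
    show "u m \<le> l n \<or> u n \<le> l m" if "m \<noteq> n" for m n
    proof (cases "m < n")
      case True
      then have "real (m + Suc n0) * e \<le> real (n + n0) * e" using e by (intro mult_right_mono) auto
      then show ?thesis unfolding u_def l_def by simp
    next
      case False
      then have "real (n + Suc n0) * e \<le> real (m + n0) * e" using e that by (intro mult_right_mono) auto
      then show ?thesis unfolding u_def l_def by simp
    qed
    show "l n \<le> u n" for n unfolding u_def l_def using e by (simp add: mult_right_mono)
    show "0 \<le> d n" for n unfolding d_def using f0 ua[of n] upos[of n] e
      by (intro divide_nonneg_pos mult_nonneg_nonneg) (auto simp: u_def)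
    show "d n \<le> f x * ln x / x" if x: "x \<in> {l n..<u n}" for n x
    proof -
      have xa: "a \<le> x" using x la[of n] by auto
      have "f (u n) * ln (u n) \<le> f x * ln x"
        by (rule monotone_onD[OF am]) (use x xa ua[of n] in auto)
      moreover have "0 \<le> f (u n) * ln (u n)" using f0 ua[of n] e by (intro mult_nonneg_nonneg) (auto simp: u_def)
      moreover have "0 < x" using xa a by auto
      moreover have "x \<le> u n" using x by auto
      ultimately have "f (u n) * ln (u n) / u n \<le> f (u n) * ln (u n) / x"
        by (intro divide_left_mono) auto
      also have "\<dots> \<le> f x * ln x / x" using \<open>0 < x\<close> \<open>f (u n) * ln (u n) \<le> f x * ln x\<close>
        by (intro divide_right_mono) auto
      finally show ?thesis unfolding d_def .
    qed
  qed
  moreover have "d n * (u n - l n) = (e * (1 - exp (-e))) * (real (n + Suc n0) * f (exp (real (n + Suc n0) * e)))" for n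
  proof -
    have "real (n + n0) * e = real (n + Suc n0) * e + (-e)" by (simp add: algebra_simps)
    then have lu': "l n = u n * exp (-e)" unfolding l_def u_def by (simp only: exp_add)
    have lnu: "ln (u n) = real (n + Suc n0) * e" unfolding u_def by simp
    have "d n * (u n - l n) = f (u n) * ln (u n) * ((u n - l n) / u n)" unfolding d_def by simp
    also have "(u n - l n) / u n = 1 - exp (-e)" using upos[of n] unfolding lu' by (simp add: field_simps)
    finally show ?thesis unfolding lnu by (simp add: u_def algebra_simps)
  qed
  ultimately have "summable (\<lambda>n. (e * (1 - exp (-e))) * (real (n + Suc n0) * f (exp (real (n + Suc n0) * e))))"
    by simp
  moreover have "e * (1 - exp (-e)) \<noteq> 0" using e by simp
  ultimately have "summable (\<lambda>n. real (n + Suc n0) * f (exp (real (n + Suc n0) * e)))"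
    using summable_cmult_iff by blast
  then show ?thesis using summable_iff_shift[where k="Suc n0" and f="\<lambda>n. real n * f (exp (real n * e))"] by simp
qed


lemma lower_sum:
  fixes g :: "real \<Rightarrow> real"
  assumes b: "0 < b" "b < 1" and g0: "\<forall>x\<in>{0..b}. 0 \<le> g x" and gm: "mono_on {0..b} g"
    and fin: "(\<integral>\<^sup>+ x\<in>{0..b}. ennreal (g x / x) \<partial>lborel) < \<infinity>" and e: "e > 0"
  shows "summable (\<lambda>n. g (exp (-(real n * e))))"
proof -
  define n0 where "n0 = nat \<lceil>- ln b / e\<rceil>"
  have "- ln b / e \<le> real n0" unfolding n0_def by linarith
  then have "- ln b \<le> real n0 * e" using e by (simp add: field_simps)
  then have "exp (-(real n0 * e)) \<le> exp (ln b)" by simp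
  then have n0: "exp (-(real n0 * e)) \<le> b" using b by simp
  define l where "l n = exp (-(real (n + Suc n0) * e))" for n
  define u where "u n = exp (-(real (n + n0) * e))" for n
  define d where "d n = g (l n) / u n" for n
  have ub: "u n \<le> b" for n
  proof -
    have "real n0 * e \<le> real (n + n0) * e" using e by (intro mult_right_mono) auto
    then show ?thesis using n0 unfolding u_def by (meson exp_le_cancel_iff neg_le_iff_le order_trans)
  qed
  have lpos: "0 < l n" for n unfolding l_def by simp
  have upos: "0 < u n" for n unfolding u_def by simp
  have lu: "l n \<le> u n" for n unfolding u_def l_def using e by (simp add: mult_right_mono)
  have "summable (\<lambda>n. d n * (u n - l n))"
  proof (rule step_summable[OF fin])
    show "{l n..<u n} \<subseteq> {0..b}" for n using ub[of n] lpos[of n] by auto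
    show "u m \<le> l n \<or> u n \<le> l m" if "m \<noteq> n" for m n
    proof (cases "m < n")
      case True
      then have "real (m + Suc n0) * e \<le> real (n + n0) * e" using e by (intro mult_right_mono) auto
      then show ?thesis unfolding u_def l_def by simp
    next
      case False
      then have "real (n + Suc n0) * e \<le> real (m + n0) * e" using e that by (intro mult_right_mono) auto
      then show ?thesis unfolding u_def l_def by simp
    qed
    show "l n \<le> u n" for n by (rule lu)
    show "0 \<le> d n" for n unfolding d_def using g0 ub[of n] lpos[of n] upos[of n] lu[of n]
      by (intro divide_nonneg_pos) auto
    show "d n \<le> g x / x" if x: "x \<in> {l n..<u n}" for n x
    proof -
      have x0: "0 < x" using x lpos[of n] by auto
      have "g (l n) \<le> g x"
        by (rule mono_onD[OF gm]) (use x lpos[of n] ub[of n] in auto)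
      moreover have "0 \<le> g (l n)" using g0 ub[of n] lpos[of n] lu[of n] by auto
      moreover have "x \<le> u n" using x by auto
      ultimately have "g (l n) / u n \<le> g (l n) / x"
        using x0 by (intro divide_left_mono) auto
      also have "\<dots> \<le> g x / x" using x0 \<open>g (l n) \<le> g x\<close>
        by (intro divide_right_mono) auto
      finally show ?thesis unfolding d_def .
    qed
  qed
  moreover have "d n * (u n - l n) = (1 - exp (-e)) * g (exp (-(real (n + Suc n0) * e)))" for n
  proof -
    have "-(real (n + Suc n0) * e) = -(real (n + n0) * e) + (-e)" by (simp add: algebra_simps)
    then have lu': "l n = u n * exp (-e)" unfolding l_def u_def by (simp only: exp_add)
    have "d n * (u n - l n) = g (l n) * ((u n - l n) / u n)" unfolding d_def by simp
    also have "(u n - l n) / u n = 1 - exp (-e)" using upos[of n] unfolding lu' by (simp add: field_simps)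
    finally show ?thesis by (simp add: l_def algebra_simps)
  qed
  ultimately have "summable (\<lambda>n. (1 - exp (-e)) * g (exp (-(real (n + Suc n0) * e))))"
    by simp
  moreover have "1 - exp (-e) \<noteq> 0" using e by simp
  ultimately have "summable (\<lambda>n. g (exp (-(real (n + Suc n0) * e))))"
    using summable_cmult_iff by blast
  then show ?thesis using summable_iff_shift[where k="Suc n0" and f="\<lambda>n. g (exp (-(real n * e)))"] by simp
qed



theorem lemma4p3:
  fixes M :: "'a measure" and A :: "nat \<Rightarrow> nat \<Rightarrow> 'a \<Rightarrow> complex"
  assumes P: "prob_space M"
    and meas: "\<And>k n. k \<le> n \<Longrightarrow> A k n \<in> borel_measurable M"
    and assm1: "\<exists>N::nat. (\<forall>n\<ge>N. prob_space.indep_vars M (\<lambda>_. borel) (\<lambda>k \<omega>. cmod (A k n \<omega>)) {0..n})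
        \<and> (\<exists>(a::real) (f::real \<Rightarrow> real). a > 1
              \<and> (\<forall>x\<ge>a. 0 \<le> f x \<and> f x \<le> 1)
              \<and> antimono_on {a..} (\<lambda>x. f x * ln x)
              \<and> (\<integral>\<^sup>+ x \<in> {a..}. ennreal (f x * ln x / x) \<partial>lborel) < \<infinity>
              \<and> (\<forall>x\<ge>a. \<forall>n\<ge>N. \<forall>k\<le>n. 1 - cdf_abs M (A k n) x \<le> f x))"
    and assm2: "\<exists>(N::nat) (b::real) (g::real \<Rightarrow> real). 0 < b \<and> b < 1
              \<and> (\<forall>x\<in>{0..b}. 0 \<le> g x \<and> g x \<le> 1)
              \<and> mono_on {0..b} g
              \<and> (\<integral>\<^sup>+ x \<in> {0..b}. ennreal (g x / x) \<partial>lborel) < \<infinity>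
              \<and> (\<forall>x\<in>{0..b}. \<forall>n\<ge>N. \<forall>k\<le>n. cdf_abs M (A k n) x \<le> g x)"
  shows "AE \<omega> in M.
           (\<lambda>n. cmod (A n n \<omega>) powr (1 / real n)) \<longlonglongrightarrow> 1
         \<and> (\<forall>k. (\<lambda>n. cmod (A k n \<omega>) powr (1 / real n)) \<longlonglongrightarrow> 1)
         \<and> (\<lambda>n. Max {cmod (A k n \<omega>) powr (1 / real n) | k. k \<le> n}) \<longlonglongrightarrow> 1"
proof -
  interpret prob_space M by (rule P)
  from assm1 obtain N1 a f where a: "a > 1" and f01: "\<forall>x\<ge>a. 0 \<le> f x \<and> f x \<le> 1"
    and am: "antimono_on {a..} (\<lambda>x. f x * ln x)"
    and fin1: "(\<integral>\<^sup>+ x \<in> {a..}. ennreal (f x * ln x / x) \<partial>lborel) < \<infinity>"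
    and fb: "\<forall>x\<ge>a. \<forall>n\<ge>N1. \<forall>k\<le>n. 1 - cdf_abs M (A k n) x \<le> f x" by blast
  from assm2 obtain N2 b g where b: "0 < b" "b < 1" and g01: "\<forall>x\<in>{0..b}. 0 \<le> g x \<and> g x \<le> 1"
    and gm: "mono_on {0..b} g"
    and fin2: "(\<integral>\<^sup>+ x \<in> {0..b}. ennreal (g x / x) \<partial>lborel) < \<infinity>"
    and gb: "\<forall>x\<in>{0..b}. \<forall>n\<ge>N2. \<forall>k\<le>n. cdf_abs M (A k n) x \<le> g x" by blast
  have f0: "\<forall>x\<ge>a. 0 \<le> f x" using f01 by auto
  have g0: "\<forall>x\<in>{0..b}. 0 \<le> g x" using g01 by auto
  have evA: "{\<omega>\<in>space M. c < cmod (A k n \<omega>)} \<in> sets M" if "k \<le> n" for k n c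
  proof -
    have [measurable]: "A k n \<in> borel_measurable M" using meas that by auto
    show ?thesis by measurable
  qed
  have evB: "{\<omega>\<in>space M. cmod (A k n \<omega>) \<le> c} \<in> sets M" if "k \<le> n" for k n c
  proof -
    have [measurable]: "A k n \<in> borel_measurable M" using meas that by auto
    show ?thesis by measurable
  qed
  have pgt: "prob {\<omega>\<in>space M. x < cmod (A k n \<omega>)} \<le> f x" if "x \<ge> a" "n \<ge> N1" "k \<le> n" for x k n
  proof -
    have "{\<omega>\<in>space M. x < cmod (A k n \<omega>)} = space M - {\<omega>\<in>space M. cmod (A k n \<omega>) \<le> x}" by auto
    then have "prob {\<omega>\<in>space M. x < cmod (A k n \<omega>)} = 1 - cdf_abs M (A k n) x"
      using prob_compl[OF evB[OF that(3)]] unfolding cdf_abs_def by simp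
    then show ?thesis using fb that by auto
  qed
  have ple: "prob {\<omega>\<in>space M. cmod (A k n \<omega>) \<le> x} \<le> g x" if "x \<in> {0..b}" "n \<ge> N2" "k \<le> n" for x k n
    using gb that unfolding cdf_abs_def by auto
  define t where "t j = 1 / real (Suc j)" for j :: nat
  have tpos: "t j > 0" for j unfolding t_def by simp
  have ev_a: "eventually (\<lambda>n. a \<le> exp (real n * t j)) sequentially" for j
  proof -
    define n1 where "n1 = nat \<lceil>ln a / t j\<rceil>"
    have "a \<le> exp (real n * t j)" if "n \<ge> n1" for n
    proof -
      have "ln a / t j \<le> real n" using that unfolding n1_def by linarith
      then have "ln a \<le> real n * t j" using tpos[of j] by (simp add: field_simps)
      then have "exp (ln a) \<le> exp (real n * t j)" by simp
      then show ?thesis using a by simp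
    qed
    then show ?thesis unfolding eventually_sequentially by blast
  qed
  have ev_b: "eventually (\<lambda>n. exp (-(real n * t j)) \<le> b) sequentially" for j
  proof -
    define n1 where "n1 = nat \<lceil>- ln b / t j\<rceil>"
    have "exp (-(real n * t j)) \<le> b" if "n \<ge> n1" for n
    proof -
      have "- ln b / t j \<le> real n" using that unfolding n1_def by linarith
      then have "- ln b \<le> real n * t j" using tpos[of j] by (simp add: field_simps)
      then have "exp (-(real n * t j)) \<le> exp (ln b)" by simp
      then show ?thesis using b by simp
    qed
    then show ?thesis unfolding eventually_sequentially by blast
  qed
  define U where "U j n = {\<omega>\<in>space M. \<exists>k\<le>n. exp (real n * t j) < cmod (A k n \<omega>)}" for j n
  define L where "L j k n = (if k \<le> n then {\<omega>\<in>space M. cmod (A k n \<omega>) \<le> exp (-(real n * t j))} else {})" for j k n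
  define D where "D j n = {\<omega>\<in>space M. cmod (A n n \<omega>) \<le> exp (-(real n * t j))}" for j n
  have U_eq: "U j n = (\<Union>k\<in>{..n}. {\<omega>\<in>space M. exp (real n * t j) < cmod (A k n \<omega>)})" for j n
    by (auto simp: U_def)
  have U_sets: "U j n \<in> sets M" for j n unfolding U_eq by (intro sets.finite_UN) (auto intro: evA)
  have L_sets: "L j k n \<in> sets M" for j k n unfolding L_def using evB by auto
  have D_sets: "D j n \<in> sets M" for j n unfolding D_def using evB by auto
  have pU: "prob (U j n) \<le> real (Suc n) * f (exp (real n * t j))" if "n \<ge> N1" "a \<le> exp (real n * t j)" for j n
  proof -
    have "prob (U j n) \<le> (\<Sum>k\<in>{..n}. prob {\<omega>\<in>space M. exp (real n * t j) < cmod (A k n \<omega>)})"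
      unfolding U_eq by (rule finite_measure_subadditive_finite) (auto intro: evA)
    also have "\<dots> \<le> (\<Sum>k\<in>{..n}. f (exp (real n * t j)))"
      by (rule sum_mono) (use pgt that in auto)
    also have "\<dots> = real (Suc n) * f (exp (real n * t j))" by simp
    finally show ?thesis .
  qed
  have sumU: "summable (\<lambda>n. measure M (U j n))" for j
  proof -
    have "summable (\<lambda>n. 2 * (real n * f (exp (real n * t j))))"
      by (intro summable_mult upper_sum[OF a f0 am fin1 tpos])
    moreover have "eventually (\<lambda>n. norm (measure M (U j n)) \<le> 2 * (real n * f (exp (real n * t j)))) sequentially"
      using ev_a[of j] eventually_ge_at_top[of N1] eventually_ge_at_top[of "1::nat"]
    proof eventually_elim
      case (elim n)
      have "0 \<le> f (exp (real n * t j))" using f0 elim by auto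
      moreover have "real (Suc n) \<le> 2 * real n" using elim by auto
      ultimately have "real (Suc n) * f (exp (real n * t j)) \<le> 2 * (real n * f (exp (real n * t j)))"
        by (metis mult.assoc mult_right_mono)
      then show ?case using pU[of n j] elim by simp
    qed
    ultimately show ?thesis by (rule summable_comparison_test_ev[rotated])
  qed
  have sumL: "summable (\<lambda>n. measure M (L j k n))" for j k
  proof -
    have "summable (\<lambda>n. g (exp (-(real n * t j))))"
      by (rule lower_sum[OF b g0 gm fin2 tpos])
    moreover have "eventually (\<lambda>n. norm (measure M (L j k n)) \<le> g (exp (-(real n * t j)))) sequentially"
      using ev_b[of j] eventually_ge_at_top[of N2] eventually_ge_at_top[of k]
    proof eventually_elim
      case (elim n)
      then show ?case using ple[of "exp (-(real n * t j))" n k] by (simp add: L_def)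
    qed
    ultimately show ?thesis by (rule summable_comparison_test_ev[rotated])
  qed
  have sumD: "summable (\<lambda>n. measure M (D j n))" for j
  proof -
    have "summable (\<lambda>n. g (exp (-(real n * t j))))"
      by (rule lower_sum[OF b g0 gm fin2 tpos])
    moreover have "eventually (\<lambda>n. norm (measure M (D j n)) \<le> g (exp (-(real n * t j)))) sequentially"
      using ev_b[of j] eventually_ge_at_top[of N2]
    proof eventually_elim
      case (elim n)
      then show ?case using ple[of "exp (-(real n * t j))" n n] by (simp add: D_def)
    qed
    ultimately show ?thesis by (rule summable_comparison_test_ev[rotated])
  qed
  have AE1: "AE \<omega> in M. \<forall>j. eventually (\<lambda>n. \<omega> \<in> space M - U j n) sequentially"
    unfolding AE_all_countable
    by (intro allI borel_cantelli_AE1 U_sets sumU) (simp add: less_top[symmetric])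
  have AE2: "AE \<omega> in M. \<forall>j k. eventually (\<lambda>n. \<omega> \<in> space M - L j k n) sequentially"
    unfolding AE_all_countable
    by (intro allI borel_cantelli_AE1 L_sets sumL) (simp add: less_top[symmetric])
  have AE3: "AE \<omega> in M. \<forall>j. eventually (\<lambda>n. \<omega> \<in> space M - D j n) sequentially"
    unfolding AE_all_countable
    by (intro allI borel_cantelli_AE1 D_sets sumD) (simp add: less_top[symmetric])
  show ?thesis using AE1 AE2 AE3
  proof eventually_elim
    case (elim \<omega>)
    define c where "c k n = cmod (A k n \<omega>)" for k n
    have up: "eventually (\<lambda>n. \<forall>k\<le>n. c k n \<le> exp (real n * t j)) sequentially" for j
      using elim(1)[rule_format, of j] by eventually_elim (auto simp: U_def c_def not_less)
    have lowk: "eventually (\<lambda>n. k \<le> n \<longrightarrow> exp (-(real n * t j)) \<le> c k n) sequentially" for j k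
      using elim(2)[rule_format, of j k] by eventually_elim (auto simp: L_def c_def not_le)
    have lowd: "eventually (\<lambda>n. exp (-(real n * t j)) \<le> c n n) sequentially" for j
      using elim(3)[rule_format, of j] by eventually_elim (auto simp: D_def c_def not_le)
    have bnd: "exp (-(1 / real (Suc j))) \<le> c k n powr (1/real n) \<and> c k n powr (1/real n) \<le> exp (1 / real (Suc j))"
      if "n > 0" "exp (-(real n * t j)) \<le> c k n" "c k n \<le> exp (real n * t j)" for j k n
      using powr_bounds[OF that] unfolding t_def .
    have C1: "(\<lambda>n. c n n powr (1 / real n)) \<longlonglongrightarrow> 1"
    proof (rule conv_from_bounds, intro allI)
      fix j
      show "eventually (\<lambda>n. exp (-(1/real (Suc j))) \<le> c n n powr (1 / real n) \<and> c n n powr (1 / real n) \<le> exp (1/real (Suc j))) sequentially"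
        using up[of j] lowd[of j] eventually_ge_at_top[of "1::nat"]
        by eventually_elim (rule bnd, auto)
    qed
    have C2: "(\<lambda>n. c k n powr (1 / real n)) \<longlonglongrightarrow> 1" for k
    proof (rule conv_from_bounds, intro allI)
      fix j
      show "eventually (\<lambda>n. exp (-(1/real (Suc j))) \<le> c k n powr (1 / real n) \<and> c k n powr (1 / real n) \<le> exp (1/real (Suc j))) sequentially"
        using up[of j] lowk[of k j] eventually_ge_at_top[of "Suc k"]
        by eventually_elim (rule bnd, auto)
    qed
    have setq: "{cmod (A k n \<omega>) powr (1 / real n) | k. k \<le> n} = (\<lambda>k. c k n powr (1 / real n)) ` {..n}" for n
      by (auto simp: c_def)
    have C3: "(\<lambda>n. Max ((\<lambda>k. c k n powr (1 / real n)) ` {..n})) \<longlonglongrightarrow> 1"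
    proof (rule conv_from_bounds, intro allI)
      fix j
      show "eventually (\<lambda>n. exp (-(1/real (Suc j))) \<le> Max ((\<lambda>k. c k n powr (1 / real n)) ` {..n})
           \<and> Max ((\<lambda>k. c k n powr (1 / real n)) ` {..n}) \<le> exp (1/real (Suc j))) sequentially"
        using up[of j] lowd[of j] eventually_ge_at_top[of "1::nat"]
      proof eventually_elim
        case (elim n)
        have "exp (-(1/real (Suc j))) \<le> c n n powr (1 / real n)"
          using bnd[of n j n] elim by auto
        also have "\<dots> \<le> Max ((\<lambda>k. c k n powr (1 / real n)) ` {..n})"
          by (rule Max_ge) auto
        finally have l: "exp (-(1/real (Suc j))) \<le> Max ((\<lambda>k. c k n powr (1 / real n)) ` {..n})" .
        have "\<forall>k\<le>n. c k n powr (1 / real n) \<le> exp (1/real (Suc j))"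
        proof (intro allI impI)
          fix k assume k: "k \<le> n"
          have "exp (-(real n * t j)) \<le> c k n \<or> c k n < exp (-(real n * t j))" by linarith
          then show "c k n powr (1 / real n) \<le> exp (1/real (Suc j))"
          proof
            assume "exp (-(real n * t j)) \<le> c k n"
            then show ?thesis using bnd[of n j k] elim k by auto
          next
            assume lt: "c k n < exp (-(real n * t j))"
            have "c k n powr (1 / real n) \<le> exp (-(real n * t j)) powr (1 / real n)"
              using lt by (intro powr_mono2) (auto simp: c_def)
            also have "\<dots> \<le> exp (real n * t j) powr (1 / real n)"
              using tpos[of j] by (intro powr_mono2) auto
            also have "\<dots> = exp (1/real (Suc j))" using elim by (simp add: exp_powr_real t_def)
            finally show ?thesis .
          qed
        qed
        then have "Max ((\<lambda>k. c k n powr (1 / real n)) ` {..n}) \<le> exp (1/real (Suc j))"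
          by (subst Max_le_iff) auto
        with l show ?case by simp
      qed
    qed
    show ?case using C1 C2 C3 unfolding setq by (simp add: c_def)
  qed
qed

end
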